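(* Let $\mathcal{V}$ be a finite set of Boolean variables, and let $\phi^{inv}_1=\mathbf{G}\,B_1(\mathcal{V}\cup\mathbf{X}\mathcal{V})$ and $\phi^{inv}_2=\mathbf{G}\,B_2(\mathcal{V}\cup\mathbf{X}\mathcal{V})$ be two invariants with non-empty languages such that $\phi^{inv}_1\rightarrow\phi^{inv}_2$ is valid, $\phi^{inv}_2\rightarrow\phi^{inv}_1$ is not valid, and $L(\phi^{inv}_2)$ is strongly connected. Then $\dim(L(\phi^{inv}_1))<\dim(L(\phi^{inv}_2))$.
   Context: Formulae are interpreted over $\omega$-words $w=w_1w_2\dots$ over $\Sigma=2^{\mathcal{V}}$; $L(\phi)$ is the set of $\omega$-words satisfying $\phi$; a formula is valid if every $\omega$-word satisfies it. $B(\mathcal{V}\cup\mathbf{X}\mathcal{V})$ denotes a pure Boolean expression over the atoms $p$ and $\mathbf{X}p$ for $p\in\mathcal{V}$; $w\models p$ iff $p\in w_1$, $w\models\mathbf{X}p$ iff $p\in w_2$, and $w\models\mathbf{G}\psi$ iff every suffix $w^j=w_jw_{j+1}\dots$ satisfies $\psi$. For $L\subseteq\Sigma^\omega$, $A(L)$ is the set of finite prefixes of words of $L$, and for $u\in A(L)$, $S_u(L)=\{v\in\Sigma^\omega: uv\in L\}$. $L$ is strongly connected if for every $u\in A(L)$ there is a finite word $v\in\Sigma^*$ with $S_{uv}(L)=L$. Let $r=|\Sigma|$. The $\alpha$-dimensional Hausdorff outer measure is $m_\alpha(L)=\lim_{n\to\infty}\inf_{V\in\mathcal{L}_n}\sum_{v\in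 V}r^{-\alpha|v|}$, where $\mathcal{L}_n$ is the collection of sets $V\subseteq\Sigma^*$ of words of length at least $n$ such that every word of $L$ has a prefix in $V$; the Hausdorff dimension $\dim(L)$ is the unique $\bar\alpha$ with $m_\alpha(L)=\infty$ for $\alpha<\bar\alpha$ and $m_\alpha(L)=0$ for $\alpha>\bar\alpha$. *)

theory Defs
  imports "HOL-Analysis.Analysis" "HOL-Library.Omega_Words_Fun"
begin

text \<open>The finite set of Boolean variables V is the finite type 'v (V = UNIV);
  the alphabet Sigma = 2^V is the type 'v set; omega-words are 'v set word
  (= nat => 'v set), finite words are 'v set list. Positions are 0-based.\<close>

text \<open>Pure Boolean expressions over atoms p and X p, p in V.\<close>
datatype 'v bexp =
    BTrue
  | BFalse
  | Atom 'v
  | NextAtom 'v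
  | BNot "'v bexp"
  | BAnd "'v bexp" "'v bexp"
  | BOr "'v bexp" "'v bexp"

fun beval :: "'v bexp \<Rightarrow> 'v set word \<Rightarrow> bool" where
  "beval BTrue w = True"
| "beval BFalse w = False"
| "beval (Atom p) w = (p \<in> w 0)"
| "beval (NextAtom p) w = (p \<in> w 1)"
| "beval (BNot b) w = (\<not> beval b w)"
| "beval (BAnd b c) w = (beval b w \<and> beval c w)"
| "beval (BOr b c) w = (beval b w \<or> beval c w)"

definition sat_inv :: "'v set word \<Rightarrow> 'v bexp \<Rightarrow> bool" where
  "sat_inv w B \<longleftrightarrow> (\<forall>j. beval B (suffix j w))"

definition inv_lang :: "'v bexp \<Rightarrow> 'v set word set" where
  "inv_lang B = {w. sat_inv w B}"

definition prefixes_of :: "'a word set \<Rightarrow> 'a list set" where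
  "prefixes_of L = {u. \<exists>w\<in>L. \<exists>n. u = subsequence w 0 n}"

definition state_of :: "'a list \<Rightarrow> 'a word set \<Rightarrow> 'a word set" where
  "state_of u L = {v. u \<frown> v \<in> L}"

definition strongly_connected :: "'a word set \<Rightarrow> bool" where
  "strongly_connected L \<longleftrightarrow>
     (\<forall>u\<in>prefixes_of L. \<exists>v. state_of (u @ v) L = L)"

definition covers :: "nat \<Rightarrow> 'a word set \<Rightarrow> 'a list set set" where
  "covers n L = {V. (\<forall>v\<in>V. n \<le> length v) \<and>
                    (\<forall>w\<in>L. \<exists>k. subsequence w 0 k \<in> V)}"

definition cover_sum :: "real \<Rightarrow> 'v::finite set list set \<Rightarrow> ennreal" where
  "cover_sum \<alpha> V = (SUP F\<in>{F. finite F \<and> F \<subseteq> V}.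
      \<Sum>v\<in>F. ennreal (real (card (UNIV :: 'v set set)) powr (- \<alpha> * real (length v))))"

text \<open>alpha-dimensional Hausdorff outer measure: lim_{n\<rightarrow>\<infinity>} inf_{V\<in>L_n} sum.
  The sequence is nondecreasing in n, the limit (lim) exists in ennreal.\<close>
definition hausdorff_measure :: "real \<Rightarrow> 'v::finite set word set \<Rightarrow> ennreal" where
  "hausdorff_measure \<alpha> L = lim (\<lambda>n. INF V\<in>covers n L. cover_sum \<alpha> V)"

definition hausdorff_dim :: "'v::finite set word set \<Rightarrow> real" where
  "hausdorff_dim L = (THE a. (\<forall>\<alpha>. \<alpha> < a \<longrightarrow> hausdorff_measure \<alpha> L = \<infinity>) \<and>
                               (\<forall>\<alpha>. \<alpha> > a \<longrightarrow> hausdorff_measure \<alpha> L = 0))"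

end

theory Submission
  imports Defs
begin


definition brel :: "'v bexp \<Rightarrow> 'v set \<Rightarrow> 'v set \<Rightarrow> bool" where
  "brel B a b = beval B (\<lambda>k. if k = 0 then a else b)"

lemma beval_brel: "beval B w = brel B (w 0) (w 1)"
  unfolding brel_def by (induction B) auto

lemma sat_inv_iff: "sat_inv w B \<longleftrightarrow> (\<forall>j. brel B (w j) (w (Suc j)))"
  unfolding sat_inv_def by (simp add: beval_brel)

lemma inv_lang_iff: "w \<in> inv_lang B \<longleftrightarrow> (\<forall>j. brel B (w j) (w (Suc j)))"
  unfolding inv_lang_def by (simp add: sat_inv_iff)

lemma pref_of_conc: assumes "u \<frown> x \<in> L" shows "u \<in> prefixes_of L"
proof -
  have "u = prefix (length u) (u \<frown> x)" by simp
  then show ?thesis using assms unfolding prefixes_of_def by blast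
qed

lemma pref_ext: assumes "u \<in> prefixes_of L" shows "\<exists>x. u \<frown> x \<in> L"
proof -
  obtain w n where w: "w \<in> L" "u = prefix n w" using assms unfolding prefixes_of_def by blast
  have "prefix n w \<frown> suffix n w \<in> L" by (subst prefix_suffix[symmetric]) (rule w(1))
  then show ?thesis using w(2) by blast
qed

lemma pref_pair:
  assumes "u \<in> prefixes_of (inv_lang B)" "Suc p < length u"
  shows "brel B (u!p) (u!Suc p)"
proof -
  obtain x where x: "u \<frown> x \<in> inv_lang B" using pref_ext[OF assms(1)] by blast
  then have "brel B ((u \<frown> x) p) ((u \<frown> x) (Suc p))" unfolding inv_lang_iff by blast
  moreover have "(u \<frown> x) p = u ! p" "(u \<frown> x) (Suc p) = u ! Suc p" using assms(2) by simp_all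
  ultimately show ?thesis by simp
qed

lemma inv_lang_suffix: "x \<in> inv_lang B \<Longrightarrow> suffix k x \<in> inv_lang B"
  unfolding inv_lang_iff by simp

lemma markov:
  assumes "u \<in> prefixes_of (inv_lang B)" "u \<noteq> []" "x \<in> inv_lang B"
  shows "u \<frown> x \<in> inv_lang B \<longleftrightarrow> brel B (last u) (x 0)"
proof
  assume "u \<frown> x \<in> inv_lang B"
  then have "brel B ((u \<frown> x) (length u - 1)) ((u \<frown> x) (Suc (length u - 1)))"
    unfolding inv_lang_iff by blast
  then show "brel B (last u) (x 0)" using assms(2)
    by (simp add: last_conv_nth)
next
  assume h: "brel B (last u) (x 0)"
  show "u \<frown> x \<in> inv_lang B" unfolding inv_lang_iff
  proof
    fix j
    consider "Suc j < length u" | "Suc j = length u" | "j \<ge> length u" by linarith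
    then show "brel B ((u \<frown> x) j) ((u \<frown> x) (Suc j))"
    proof cases
      case 1
      then have "(u \<frown> x) j = u ! j" "(u \<frown> x) (Suc j) = u ! Suc j" by simp_all
      then show ?thesis using pref_pair[OF assms(1) 1] by simp
    next
      case 2
      have j: "j = length u - 1" using 2 by simp
      have "(u \<frown> x) j = last u" using assms(2) 2 j by (simp add: last_conv_nth)
      moreover have "(u \<frown> x) (Suc j) = x 0" using 2 by simp
      ultimately show ?thesis using h by simp
    next
      case 3
      then have "Suc j - length u = Suc (j - length u)" by simp
      have e1: "(u \<frown> x) j = x (j - length u)" using 3 by simp
      have e2: "(u \<frown> x) (Suc j) = x (Suc (j - length u))" using 3 \<open>Suc j - length u = Suc (j - length u)\<close> by simp
      have "brel B (x (j - length u)) (x (Suc (j - length u)))"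
        using assms(3) unfolding inv_lang_iff by blast
      then show ?thesis unfolding e1 e2 .
    qed
  qed
qed

lemma pref_take: "u \<in> prefixes_of L \<Longrightarrow> take k u \<in> prefixes_of L"
  unfolding prefixes_of_def
proof (safe)
  fix w n assume "w \<in> L"
  show "\<exists>w'\<in>L. \<exists>n'. take k (prefix n w) = prefix n' w'"
  proof (rule bexI[OF _ \<open>w \<in> L\<close>], rule exI[of _ "min k n"])
    have "take k [0..<n] = [0..<min k n]" by (cases "k \<le> n") (simp_all add: min_def)
    then show "take k (prefix n w) = prefix (min k n) w" by (simp add: subsequence_def take_map)
  qed
qed

lemma pref_drop:
  assumes "u \<in> prefixes_of (inv_lang B)"
  shows "drop k u \<in> prefixes_of (inv_lang B)"
proof -
  obtain x where x: "u \<frown> x \<in> inv_lang B" using pref_ext[OF assms] by blast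
  have "suffix (min k (length u)) (u \<frown> x) = drop k u \<frown> x"
  proof
    fix i
    show "suffix (min k (length u)) (u \<frown> x) i = (drop k u \<frown> x) i"
    proof (cases "k \<le> length u")
      case True
      show ?thesis
      proof (cases "i + k < length u")
        case True
        then have "i < length (drop k u)" by simp
        then show ?thesis using True by (simp add: add.commute)
      next
        case False
        then have "\<not> i < length (drop k u)" by simp
        then show ?thesis using False \<open>k \<le> length u\<close> by (simp add: add.commute min_def)
      qed
    next
      case False
      then show ?thesis by (simp add: conc_def min_def)
    qed
  qed
  then have "drop k u \<frown> x \<in> inv_lang B" using inv_lang_suffix[OF x, of "min k (length u)"] by simp
  then show ?thesis by (rule pref_of_conc)
qed

lemma pref_closed:
  assumes "\<And>n. prefix n x \<in> prefixes_of (inv_lang B)"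
  shows "x \<in> inv_lang B"
  unfolding inv_lang_iff
proof
  fix j
  have "brel B (prefix (Suc (Suc j)) x ! j) (prefix (Suc (Suc j)) x ! Suc j)"
    by (rule pref_pair[OF assms]) simp
  then show "brel B (x j) (x (Suc j))" by (simp add: nth_append)
qed

definition P :: "nat \<Rightarrow> 'a word set \<Rightarrow> 'a list set" where
  "P n L = {u \<in> prefixes_of L. length u = n}"

lemma finite_P: "finite (P n (L :: ('v::finite) word set))"
  by (rule finite_subset[OF _ finite_lists_length_eq[of "UNIV :: 'v set" n]]) (auto simp: P_def)

lemma card_P_le: "card (P n (L :: ('v::finite) word set)) \<le> CARD('v) ^ n"
proof -
  have "card (P n L) \<le> card {xs. set xs \<subseteq> (UNIV::'v set) \<and> length xs = n}"
    by (rule card_mono[OF finite_lists_length_eq]) (auto simp: P_def)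
  then show ?thesis using card_lists_length_eq[of "UNIV :: 'v set" n] by simp
qed


lemma rr_ge2: "real CARD('v::finite set) \<ge> 2"
proof -
  have c: "CARD('v) \<noteq> 0" by simp
  have "CARD('v set) = 2 ^ CARD('v)" using c by (simp only: card_UNIV_set if_False)
  moreover have "(2::nat) \<le> 2 ^ CARD('v)" using c by (cases "CARD('v)") simp_all
  ultimately have n: "(2::nat) \<le> CARD('v set)" by simp
  have "real (2::nat) \<le> real CARD('v set)" using n by (simp only: of_nat_le_iff)
  then show ?thesis by (simp only: of_nat_numeral)
qed

definition wt :: "real \<Rightarrow> 'v::finite set list \<Rightarrow> real" where
  "wt \<alpha> v = real CARD('v set) powr (- \<alpha> * real (length v))"

lemma wt_pos: fixes v :: "'v::finite set list" shows "wt \<alpha> v > 0"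
proof -
  have "real CARD('v set) \<ge> 2" by (rule rr_ge2)
  then show ?thesis unfolding wt_def by (simp del: card_UNIV_set)
qed

lemma cover_sum_wt: "cover_sum \<alpha> V = (SUP F\<in>{F. finite F \<and> F \<subseteq> V}. ennreal (\<Sum>v\<in>F. wt \<alpha> v))"
  unfolding cover_sum_def wt_def[symmetric]
  by (rule SUP_cong) (auto intro!: sum_ennreal less_imp_le[OF wt_pos])

lemma cover_sum_fin: "finite F \<Longrightarrow> F \<subseteq> V \<Longrightarrow> ennreal (\<Sum>v\<in>F. wt \<alpha> v) \<le> cover_sum \<alpha> V"
  unfolding cover_sum_wt by (rule SUP_upper) auto

lemma cover_sum_le:
  assumes "\<And>F. finite F \<Longrightarrow> F \<subseteq> V \<Longrightarrow> ennreal (\<Sum>v\<in>F. wt \<alpha> v) \<le> M"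
  shows "cover_sum \<alpha> V \<le> M"
  unfolding cover_sum_wt by (rule SUP_least) (use assms in auto)

definition Infn :: "real \<Rightarrow> 'v::finite set word set \<Rightarrow> nat \<Rightarrow> ennreal" where
  "Infn \<alpha> L n = (INF V\<in>covers n L. cover_sum \<alpha> V)"

lemma covers_mono: "m \<le> n \<Longrightarrow> covers n L \<subseteq> covers m L"
  unfolding covers_def by auto

lemma Infn_mono: "m \<le> n \<Longrightarrow> Infn \<alpha> L m \<le> Infn \<alpha> L n"
  unfolding Infn_def by (rule INF_superset_mono[OF covers_mono]) auto

lemma hm_SUP: "hausdorff_measure \<alpha> L = (SUP n. Infn \<alpha> L n)"
proof -
  have "incseq (Infn \<alpha> L)" by (simp add: incseq_def Infn_mono)
  then have "Infn \<alpha> L \<longlonglongrightarrow> (SUP n. Infn \<alpha> L n)" by (rule LIMSEQ_SUP)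
  then show ?thesis unfolding hausdorff_measure_def Infn_def[symmetric] by (rule limI)
qed

lemma wt_scale:
  assumes "n \<le> length v" "\<alpha> \<le> \<beta>"
  shows "wt \<beta> (v :: 'v::finite set list) \<le> real CARD('v set) powr (- (\<beta> - \<alpha>) * n) * wt \<alpha> v"
proof -
  let ?r = "real CARD('v set)"
  have r: "?r \<ge> 2" by (rule rr_ge2)
  have "wt \<beta> v = ?r powr (- (\<beta> - \<alpha>) * length v) * wt \<alpha> v"
  proof -
    have e: "- \<beta> * real (length v) = - (\<beta> - \<alpha>) * length v + - \<alpha> * real (length v)"
      by algebra
    show ?thesis unfolding wt_def by (subst e) (rule powr_add)
  qed
  also have "\<dots> \<le> ?r powr (- (\<beta> - \<alpha>) * n) * wt \<alpha> v"
  proof (rule mult_right_mono)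
    have "- (\<beta> - \<alpha>) * real (length v) \<le> - (\<beta> - \<alpha>) * real n"
      using assms by (intro mult_left_mono_neg) auto
    then show "?r powr (- (\<beta> - \<alpha>) * length v) \<le> ?r powr (- (\<beta> - \<alpha>) * n)"
      by (rule powr_mono) (use r in auto)
    show "0 \<le> wt \<alpha> v" using wt_pos[of \<alpha> v] by linarith
  qed
  finally show ?thesis .
qed

lemma cover_sum_scale:
  assumes "V \<in> covers n L" "\<alpha> \<le> \<beta>"
  shows "cover_sum \<beta> V \<le> ennreal (real CARD('v set) powr (- (\<beta> - \<alpha>) * n)) * cover_sum \<alpha> (V :: 'v::finite set list set)"
proof (rule cover_sum_le)
  let ?r = "real CARD('v set)"
  let ?c = "?r powr (- (\<beta> - \<alpha>) * n)"
  fix F assume F: "finite F" "F \<subseteq> V"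
  have "(\<Sum>v\<in>F. wt \<beta> v) \<le> (\<Sum>v\<in>F. ?c * wt \<alpha> v)"
  proof (rule sum_mono)
    fix v assume "v \<in> F"
    then have ln: "n \<le> length v" using F assms(1) unfolding covers_def by auto
    show "wt \<beta> v \<le> ?c * wt \<alpha> v" by (rule wt_scale[OF ln assms(2)])
  qed
  also have "\<dots> = ?c * (\<Sum>v\<in>F. wt \<alpha> v)" by (simp add: sum_distrib_left)
  finally have "(\<Sum>v\<in>F. wt \<beta> v) \<le> ?c * (\<Sum>v\<in>F. wt \<alpha> v)" .
  then have "ennreal (\<Sum>v\<in>F. wt \<beta> v) \<le> ennreal (?c * (\<Sum>v\<in>F. wt \<alpha> v))"
    by (rule ennreal_leI)
  also have "\<dots> = ennreal ?c * ennreal (\<Sum>v\<in>F. wt \<alpha> v)"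
  proof (rule ennreal_mult)
    show "0 \<le> ?c" by simp
    show "0 \<le> (\<Sum>v\<in>F. wt \<alpha> v)" by (rule sum_nonneg, rule less_imp_le[OF wt_pos])
  qed
  also have "\<dots> \<le> ennreal ?c * cover_sum \<alpha> V"
    by (rule mult_left_mono[OF cover_sum_fin[OF F]]) simp
  finally show "ennreal (\<Sum>v\<in>F. wt \<beta> v) \<le> ennreal ?c * cover_sum \<alpha> V" .
qed


lemma geom_pow:
  fixes d :: real assumes "d > 0"
  shows "real CARD('v::finite set) powr (- d * real n) = (real CARD('v set) powr (- d)) ^ n"
proof -
  have r: "real CARD('v set) \<ge> 2" by (rule rr_ge2)
  have "(real CARD('v set) powr (- d)) ^ n = (real CARD('v set) powr (- d)) powr (real n)"
    by (rule powr_realpow[symmetric]) (use r in simp)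
  also have "\<dots> = real CARD('v set) powr (- d * real n)" by (rule powr_powr)
  finally show ?thesis by simp
qed

lemma geom_lt1:
  fixes d :: real assumes "d > 0"
  shows "real CARD('v::finite set) powr (- d) < 1"
proof -
  have r: "real CARD('v set) > 1" using rr_ge2[where 'v='v] by linarith
  have "real CARD('v set) powr (- d) < real CARD('v set) powr 0"
    by (rule powr_less_mono) (use assms r in auto)
  then show ?thesis using r by simp
qed

lemma hm_zero:
  fixes L :: "'v::finite set word set"
  assumes fin: "hausdorff_measure \<alpha> L \<noteq> \<infinity>" and ab: "\<alpha> < \<beta>"
  shows "hausdorff_measure \<beta> L = 0"
proof -
  obtain h where h: "h \<ge> 0" "hausdorff_measure \<alpha> L = ennreal h"
    using fin by (cases "hausdorff_measure \<alpha> L") auto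
  define q where "q = real CARD('v set) powr (- (\<beta> - \<alpha>))"
  have q0: "q \<ge> 0" unfolding q_def by simp
  have q1: "q < 1" unfolding q_def by (rule geom_lt1) (use ab in simp)
  have cq: "real CARD('v set) powr (- (\<beta> - \<alpha>) * real n) = q ^ n" for n
    unfolding q_def by (rule geom_pow) (use ab in simp)
  have Ia: "Infn \<alpha> L n \<le> ennreal h" for n
    using h(2) unfolding hm_SUP by (metis SUP_upper UNIV_I)
  have zero: "Infn \<beta> L n0 = 0" for n0
  proof -
    have le: "Infn \<beta> L n0 \<le> ennreal (q ^ n * (h + 1))" if "n \<ge> n0" for n
    proof -
      have "Infn \<alpha> L n < ennreal (h + 1)" using Ia[of n] h(1)
        by (meson ennreal_lessI le_less_trans less_add_one add_nonneg_pos zero_less_one)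
      then obtain V where V: "V \<in> covers n L" "cover_sum \<alpha> V < ennreal (h + 1)"
        unfolding Infn_def INF_less_iff by blast
      have "Infn \<beta> L n0 \<le> Infn \<beta> L n" by (rule Infn_mono[OF that])
      also have "\<dots> \<le> cover_sum \<beta> V" unfolding Infn_def by (rule INF_lower[OF V(1)])
      also have "\<dots> \<le> ennreal (q ^ n) * cover_sum \<alpha> V"
        using cover_sum_scale[OF V(1), of \<alpha> \<beta>] ab cq[of n] by simp
      also have "\<dots> \<le> ennreal (q ^ n) * ennreal (h + 1)"
        by (rule mult_left_mono) (use V(2) in auto)
      also have "\<dots> = ennreal (q ^ n * (h + 1))"
        by (rule ennreal_mult[symmetric]) (use q0 h(1) in auto)
      finally show ?thesis .
    qed
    have "(\<lambda>n. q ^ n * (h + 1)) \<longlonglongrightarrow> 0 * (h + 1)"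
      by (intro tendsto_mult tendsto_const LIMSEQ_power_zero) (use q0 q1 in simp)
    then have "(\<lambda>n. ennreal (q ^ n * (h + 1))) \<longlonglongrightarrow> ennreal 0"
      by (intro tendsto_ennrealI) simp
    then have "Infn \<beta> L n0 \<le> ennreal 0"
      by (rule LIMSEQ_le_const) (use le in blast)
    then show ?thesis by simp
  qed
  show ?thesis unfolding hm_SUP zero by simp
qed

lemma hm_inf:
  fixes L :: "'v::finite set word set"
  assumes "L \<noteq> {}"
  shows "hausdorff_measure (-1) L = \<infinity>"
proof -
  obtain w where w: "w \<in> L" using assms by blast
  have r: "real CARD('v set) \<ge> 2" by (rule rr_ge2)
  have I: "ennreal (real n) \<le> Infn (-1) L n" for n
    unfolding Infn_def
  proof (rule INF_greatest)
    fix V assume V: "V \<in> covers n L"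
    then obtain k where k: "prefix k w \<in> V" using w unfolding covers_def by blast
    then have kn: "n \<le> k" using V unfolding covers_def by fastforce
    have "real n \<le> real k" using kn by simp
    also have "\<dots> \<le> 2 ^ k" using less_exp[of k]
      by (metis less_imp_le of_nat_le_iff of_nat_numeral of_nat_power)
    also have "\<dots> \<le> real CARD('v set) ^ k" by (rule power_mono) (use r in auto)
    also have "\<dots> = wt (-1) (prefix k w)"
      unfolding wt_def using r by (simp add: powr_realpow)
    finally have "ennreal (real n) \<le> ennreal (\<Sum>v\<in>{prefix k w}. wt (-1) v)" by simp
    also have "\<dots> \<le> cover_sum (-1) V" by (rule cover_sum_fin) (use k in auto)
    finally show "ennreal (real n) \<le> cover_sum (-1) V" .
  qed
  show ?thesis
  proof (rule ccontr)
    assume "hausdorff_measure (-1) L \<noteq> \<infinity>"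
    then obtain h where h: "h \<ge> 0" "hausdorff_measure (-1) L = ennreal h"
      by (cases "hausdorff_measure (-1) L") auto
    define n where "n = nat \<lceil>h\<rceil> + 1"
    have "ennreal (real n) \<le> ennreal h"
      using I[of n] h(2) unfolding hm_SUP by (metis SUP_upper UNIV_I order_trans)
    moreover have "real n > h" unfolding n_def by linarith
    ultimately show False using h(1) by (simp add: ennreal_le_iff)
  qed
qed


definition crit :: "'v::finite set word set \<Rightarrow> real \<Rightarrow> bool" where
  "crit L a \<longleftrightarrow> (\<forall>\<alpha>. \<alpha> < a \<longrightarrow> hausdorff_measure \<alpha> L = \<infinity>) \<and>
                 (\<forall>\<alpha>. \<alpha> > a \<longrightarrow> hausdorff_measure \<alpha> L = 0)"

lemma crit_unique:
  assumes "crit L a" "crit L b" shows "a = b"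
proof (rule ccontr)
  assume "a \<noteq> b"
  then consider "a < b" | "b < a" by linarith
  then show False
  proof cases
    case 1
    have "hausdorff_measure ((a+b)/2) L = \<infinity>" using assms(2) 1 unfolding crit_def by simp
    moreover have "hausdorff_measure ((a+b)/2) L = 0" using assms(1) 1 unfolding crit_def by simp
    ultimately show False by simp
  next
    case 2
    have "hausdorff_measure ((a+b)/2) L = \<infinity>" using assms(1) 2 unfolding crit_def by simp
    moreover have "hausdorff_measure ((a+b)/2) L = 0" using assms(2) 2 unfolding crit_def by simp
    ultimately show False by simp
  qed
qed

lemma crit_exists:
  fixes L :: "'v::finite set word set"
  assumes ne: "L \<noteq> {}" and fin: "hausdorff_measure \<alpha>0 L \<noteq> \<infinity>"
  shows "crit L (hausdorff_dim L)"
proof -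
  define S where "S = {\<alpha>. hausdorff_measure \<alpha> L = \<infinity>}"
  have m1: "-1 \<in> S" unfolding S_def using hm_inf[OF ne] by simp
  have bd: "\<alpha> \<le> \<alpha>0" if "\<alpha> \<in> S" for \<alpha>
  proof (rule ccontr)
    assume "\<not> \<alpha> \<le> \<alpha>0"
    then have "hausdorff_measure \<alpha> L = 0" using hm_zero[OF fin] by simp
    then show False using that unfolding S_def by simp
  qed
  have Sne: "S \<noteq> {}" using m1 by blast
  have bdd: "bdd_above S" using bd by (rule bdd_aboveI)
  define a where "a = Sup S"
  have ca: "crit L a" unfolding crit_def
  proof (intro conjI allI impI)
    fix \<alpha> assume "\<alpha> < a"
    then obtain \<alpha>' where a': "\<alpha>' \<in> S" "\<alpha> < \<alpha>'"
      unfolding a_def using less_cSup_iff[OF Sne bdd] by blast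
    show "hausdorff_measure \<alpha> L = \<infinity>"
    proof (rule ccontr)
      assume "hausdorff_measure \<alpha> L \<noteq> \<infinity>"
      then have "hausdorff_measure \<alpha>' L = 0" using hm_zero a'(2) by blast
      then show False using a'(1) unfolding S_def by simp
    qed
  next
    fix \<alpha> assume al: "\<alpha> > a"
    have "(a + \<alpha>)/2 \<notin> S"
    proof
      assume "(a + \<alpha>)/2 \<in> S"
      then have "(a + \<alpha>)/2 \<le> a" unfolding a_def using cSup_upper[OF _ bdd] by blast
      then show False using al by simp
    qed
    then have "hausdorff_measure ((a + \<alpha>)/2) L \<noteq> \<infinity>" unfolding S_def by simp
    then show "hausdorff_measure \<alpha> L = 0" by (rule hm_zero) (use al in simp)
  qed
  have "hausdorff_dim L = a"
    unfolding hausdorff_dim_def crit_def[symmetric]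
  proof (rule the_equality)
    show "crit L a" by (rule ca)
    fix x assume "crit L x" then show "x = a" using crit_unique ca by blast
  qed
  then show ?thesis using ca by simp
qed

lemma dim_le:
  fixes L :: "'v::finite set word set"
  assumes "L \<noteq> {}" "hausdorff_measure \<alpha> L \<noteq> \<infinity>"
  shows "hausdorff_dim L \<le> \<alpha>"
  using crit_exists[OF assms] assms(2) unfolding crit_def by (meson not_le)

lemma dim_ge:
  fixes L :: "'v::finite set word set"
  assumes "L \<noteq> {}" "hausdorff_measure \<alpha>0 L \<noteq> \<infinity>" "hausdorff_measure \<alpha> L \<noteq> 0"
  shows "\<alpha> \<le> hausdorff_dim L"
  using crit_exists[OF assms(1,2)] assms(3) unfolding crit_def by (meson not_le)


lemma P_in_covers:
  "P n L \<in> covers n L"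
  unfolding covers_def P_def prefixes_of_def by auto

lemma P_take: assumes "L \<noteq> {}" "m \<le> n" shows "P m L = take m ` P n L"
proof
  show "P m L \<subseteq> take m ` P n L"
  proof
    fix u assume "u \<in> P m L"
    then obtain w k where w: "w \<in> L" "u = prefix k w" "length u = m"
      unfolding P_def prefixes_of_def by blast
    have "prefix n w \<in> P n L" unfolding P_def prefixes_of_def using w(1) by auto
    moreover have "take m (prefix n w) = u"
    proof -
      have "take m [0..<n] = [0..<m]" using assms(2) by simp
      then show ?thesis using w by (simp add: subsequence_def take_map)
    qed
    ultimately show "u \<in> take m ` P n L" by (metis image_eqI)
  qed
next
  show "take m ` P n L \<subseteq> P m L"
    unfolding P_def using assms(2) pref_take by auto
qed

lemma card_P_mono:
  fixes L :: "'v::finite word set"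
  assumes "L \<noteq> {}" "m \<le> n" shows "card (P m L) \<le> card (P n L)"
  unfolding P_take[OF assms] by (rule card_image_le[OF finite_P])

lemma card_P_pos:
  fixes L :: "'v::finite word set"
  assumes "L \<noteq> {}" shows "card (P n L) \<ge> 1"
proof -
  obtain w where "w \<in> L" using assms by blast
  then have "prefix n w \<in> P n L" unfolding P_def prefixes_of_def by auto
  then have "P n L \<noteq> {}" by blast
  then show ?thesis using finite_P[of n L] by (simp add: Suc_leI card_gt_0_iff)
qed

lemma card_P_submult:
  fixes B :: "'v::finite bexp"
  shows "card (P (a + b) (inv_lang B)) \<le> card (P a (inv_lang B)) * card (P b (inv_lang B))"
proof -
  let ?L = "inv_lang B"
  have inj: "inj_on (\<lambda>u. (take a u, drop a u)) (P (a + b) ?L)"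
  proof (rule inj_onI)
    fix x y assume "(take a x, drop a x) = (take a y, drop a y)"
    then have "take a x = take a y" "drop a x = drop a y" by simp_all
    then show "x = y" by (metis append_take_drop_id)
  qed
  have sub: "(\<lambda>u. (take a u, drop a u)) ` P (a + b) ?L \<subseteq> P a ?L \<times> P b ?L"
    unfolding P_def using pref_take pref_drop by auto
  have "card (P (a + b) ?L) \<le> card (P a ?L \<times> P b ?L)"
    by (rule card_inj_on_le[OF inj sub]) (intro finite_cartesian_product finite_P)
  then show ?thesis by (simp add: card_cartesian_product)
qed

lemma wt_log:
  fixes v :: "'v::finite set list"
  assumes "\<gamma> > 0"
  shows "wt (log (real CARD('v set)) \<gamma>) v = 1 / \<gamma> ^ length v"
proof -
  let ?r = "real CARD('v set)"
  have r: "?r \<ge> 2" by (rule rr_ge2)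
  have "wt (log ?r \<gamma>) v = (?r powr (log ?r \<gamma>)) powr (- real (length v))"
    unfolding wt_def powr_powr by simp
  also have "\<dots> = \<gamma> powr (- real (length v))"
    using r assms by (subst powr_log_cancel) auto
  also have "\<dots> = 1 / \<gamma> ^ length v"
    using assms by (simp add: powr_minus powr_realpow divide_inverse)
  finally show ?thesis .
qed

lemma hm_le_count:
  fixes L :: "'v::finite set word set"
  assumes g: "\<gamma> > 0" and M: "\<And>n. real (card (P n L)) \<le> M * \<gamma> ^ n"
  shows "hausdorff_measure (log (real CARD('v set)) \<gamma>) L \<le> ennreal M"
proof -
  let ?a = "log (real CARD('v set)) \<gamma>"
  have "Infn ?a L n \<le> ennreal M" for n
  proof -
    have "Infn ?a L n \<le> cover_sum ?a (P n L)"
      unfolding Infn_def by (rule INF_lower[OF P_in_covers])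
    also have "\<dots> \<le> ennreal M"
    proof (rule cover_sum_le)
      fix F assume F: "finite F" "F \<subseteq> P n L"
      have "(\<Sum>v\<in>F. wt ?a v) = (\<Sum>v\<in>F. 1 / \<gamma> ^ n)"
      proof (rule sum.cong)
        fix v assume "v \<in> F"
        then have "length v = n" using F unfolding P_def by auto
        then show "wt ?a v = 1 / \<gamma> ^ n" using wt_log[OF g, of v] by simp
      qed simp
      also have "\<dots> = real (card F) / \<gamma> ^ n" by simp
      also have "\<dots> \<le> real (card (P n L)) / \<gamma> ^ n"
      proof (rule divide_right_mono)
        have "card F \<le> card (P n L)" by (rule card_mono[OF finite_P F(2)])
        then show "real (card F) \<le> real (card (P n L))" by (rule of_nat_mono)
        show "0 \<le> \<gamma> ^ n" using g by simp
      qed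
      also have "\<dots> \<le> M" using M[of n] g by (simp add: divide_le_eq)
      finally show "ennreal (\<Sum>v\<in>F. wt ?a v) \<le> ennreal M" by (rule ennreal_leI)
    qed
    finally show ?thesis .
  qed
  then show ?thesis unfolding hm_SUP by (rule SUP_least)
qed


lemma conc_suffix_in: "u \<frown> y \<in> inv_lang B \<Longrightarrow> y \<in> inv_lang B"
  using inv_lang_suffix[of "u \<frown> y" B "length u"] by simp

definition free :: "'a bexp \<Rightarrow> 'a set list \<Rightarrow> bool" where
  "free B z \<longleftrightarrow> (\<forall>x\<in>inv_lang B. z \<frown> x \<in> inv_lang B)"

lemma free_transfer:
  assumes "u \<in> prefixes_of (inv_lang B)" "u \<noteq> []" "u' \<in> prefixes_of (inv_lang B)" "u' \<noteq> []"
    "last u = last u'" "free B (u @ v)"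
  shows "free B (u' @ v)"
  unfolding free_def
proof
  fix x assume x: "x \<in> inv_lang B"
  have "u \<frown> (v \<frown> x) \<in> inv_lang B" using assms(6) x unfolding free_def by simp
  then have vx: "v \<frown> x \<in> inv_lang B" by (rule conc_suffix_in)
  have "brel B (last u) ((v \<frown> x) 0)"
    using markov[OF assms(1,2) vx] \<open>u \<frown> (v \<frown> x) \<in> inv_lang B\<close> by simp
  then have "u' \<frown> (v \<frown> x) \<in> inv_lang B" using markov[OF assms(3,4) vx] assms(5) by simp
  then show "(u' @ v) \<frown> x \<in> inv_lang B" by simp
qed

lemma free_app_pref:
  assumes "free B z" "y \<in> prefixes_of (inv_lang B)"
  shows "z @ y \<in> prefixes_of (inv_lang B)"
proof -
  obtain x where "y \<frown> x \<in> inv_lang B" using pref_ext[OF assms(2)] by blast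
  then have "z \<frown> (y \<frown> x) \<in> inv_lang B" using assms(1) unfolding free_def by blast
  then have "(z @ y) \<frown> x \<in> inv_lang B" by simp
  then show ?thesis by (rule pref_of_conc)
qed

lemma free_app_free:
  assumes "free B z" "free B h" shows "free B (z @ h)"
  unfolding free_def
proof
  fix x assume "x \<in> inv_lang B"
  then have "h \<frown> x \<in> inv_lang B" using assms(2) unfolding free_def by blast
  then have "z \<frown> (h \<frown> x) \<in> inv_lang B" using assms(1) unfolding free_def by blast
  then show "(z @ h) \<frown> x \<in> inv_lang B" by simp
qed

lemma free_pref:
  assumes "free B z" "inv_lang B \<noteq> {}" shows "z \<in> prefixes_of (inv_lang B)"
proof -
  obtain x where "x \<in> inv_lang B" using assms(2) by blast
  then have "z \<frown> x \<in> inv_lang B" using assms(1) unfolding free_def by blast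
  then show ?thesis by (rule pref_of_conc)
qed

lemma sc_free:
  assumes "strongly_connected (inv_lang B)" "u \<in> prefixes_of (inv_lang B)"
  shows "\<exists>v. free B (u @ v)"
proof -
  obtain v where "state_of (u @ v) (inv_lang B) = inv_lang B"
    using assms unfolding strongly_connected_def by blast
  then have "free B (u @ v)" unfolding free_def state_of_def by blast
  then show ?thesis by blast
qed

lemma sc_bound:
  fixes B :: "'v::finite bexp"
  assumes "strongly_connected (inv_lang B)"
  shows "\<exists>D\<ge>1. \<forall>u\<in>prefixes_of (inv_lang B). \<exists>v. length v \<le> D \<and> free B (u @ v)"
proof -
  let ?A = "prefixes_of (inv_lang B)"
  define vsel where "vsel a = (SOME v. \<exists>u\<in>?A. u \<noteq> [] \<and> last u = a \<and> free B (u @ v))" for a :: "'v set"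
  define D where "D = Max ((\<lambda>a. length (vsel a)) ` UNIV) + 1"
  have main: "\<exists>v. length v \<le> D \<and> free B (u @ v)" if u: "u \<in> ?A" for u
  proof (cases "u = []")
    case True
    then show ?thesis by (intro exI[of _ "[]"]) (simp add: free_def)
  next
    case False
    obtain v0 where "free B (u @ v0)" using sc_free[OF assms u] by blast
    then have "\<exists>v. \<exists>u'\<in>?A. u' \<noteq> [] \<and> last u' = last u \<and> free B (u' @ v)" using u False by blast
    then have "\<exists>u'\<in>?A. u' \<noteq> [] \<and> last u' = last u \<and> free B (u' @ vsel (last u))"
      unfolding vsel_def by (rule someI_ex)
    then obtain u' where u': "u' \<in> ?A" "u' \<noteq> []" "last u' = last u" "free B (u' @ vsel (last u))"
      by blast
    have fr: "free B (u @ vsel (last u))" by (rule free_transfer[OF u'(1,2) u False u'(3,4)])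
    have "length (vsel (last u)) \<le> Max ((\<lambda>a. length (vsel a)) ` UNIV)"
      by (rule Max_ge) simp_all
    then have le: "length (vsel (last u)) \<le> D" unfolding D_def by linarith
    show ?thesis by (rule exI[of _ "vsel (last u)"]) (rule conjI[OF le fr])
  qed
  have D1: "D \<ge> 1" unfolding D_def by linarith
  show ?thesis
  proof (intro exI[of _ D] conjI ballI)
    show "1 \<le> D" by (rule D1)
    fix u assume "u \<in> ?A" then show "\<exists>v. length v \<le> D \<and> free B (u @ v)" by (rule main)
  qed
qed


lemma root_pow: fixes x :: real assumes "x > 0" "k \<ge> 1" shows "(x ^ k) powr (1 / real k) = x"
proof -
  have e: "x ^ k = x powr real k" by (rule powr_realpow[OF assms(1), symmetric])
  have k: "real k * (1 / real k) = 1" using assms(2) by simp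
  have "(x ^ k) powr (1 / real k) = x powr (real k * (1 / real k))" unfolding e by (rule powr_powr)
  also have "\<dots> = x" unfolding k by (rule powr_one) (use assms(1) in linarith)
  finally show ?thesis .
qed

lemma pow_root: fixes x :: real assumes "x > 0" "k \<ge> 1" shows "(x powr (1 / real k)) ^ k = x"
proof -
  have p: "x powr (1 / real k) > 0" using assms(1) by simp
  have e: "(x powr (1 / real k)) ^ k = (x powr (1 / real k)) powr real k" by (rule powr_realpow[OF p, symmetric])
  have k: "1 / real k * real k = 1" using assms(2) by simp
  have "(x powr (1 / real k)) powr real k = x powr (1 / real k * real k)" by (rule powr_powr)
  also have "\<dots> = x" unfolding k by (rule powr_one) (use assms(1) in linarith)
  finally show ?thesis unfolding e .
qed

lemma pow_submult:
  fixes p :: "nat \<Rightarrow> nat"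
  assumes sub: "\<And>a b. p (a + b) \<le> p a * p b" and p0: "p 0 \<le> 1"
  shows "p (k * n) \<le> p n ^ k"
proof (induction k)
  case 0 then show ?case using p0 by simp
next
  case (Suc k)
  have "p (Suc k * n) = p (n + k * n)" by simp
  also have "\<dots> \<le> p n * p (k * n)" by (rule sub)
  also have "\<dots> \<le> p n * p n ^ k" by (rule mult_left_mono[OF Suc.IH]) simp
  finally show ?case by simp
qed

lemma p_upper_div:
  fixes p :: "nat \<Rightarrow> nat"
  assumes sub: "\<And>a b. p (a + b) \<le> p a * p b" and p0: "p 0 \<le> 1"
    and mono: "\<And>m n. m \<le> n \<Longrightarrow> p m \<le> p n" and n: "n \<ge> 1"
  shows "p M \<le> p n ^ (M div n + 1)"
proof -
  have "p M = p (M div n * n + M mod n)" by simp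
  also have "\<dots> \<le> p (M div n * n) * p (M mod n)" by (rule sub)
  also have "\<dots> \<le> p n ^ (M div n) * p n"
  proof (rule mult_mono)
    show "p (M div n * n) \<le> p n ^ (M div n)" by (rule pow_submult[OF sub p0])
    have "M mod n \<le> n" using n by (simp add: less_imp_le)
    then show "p (M mod n) \<le> p n" by (rule mono)
  qed simp_all
  finally show ?thesis by (simp add: mult.commute)
qed

lemma unbounded_ratio:
  fixes a y P :: real
  assumes y: "y > 0" and P: "P \<ge> 1" and h: "\<And>k. a ^ Suc k \<le> y ^ Suc k * P"
  shows "a \<le> y"
proof (rule ccontr)
  assume "\<not> a \<le> y"
  then have t: "a / y > 1" using y by simp
  obtain k where k: "P < (a / y) ^ k" using real_arch_pow[OF t] by blast
  have "k \<noteq> 0" using k P by (cases k) auto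
  then obtain j where j: "k = Suc j" by (cases k) auto
  have "(a / y) ^ Suc j = a ^ Suc j / y ^ Suc j" by (simp add: power_divide)
  also have "\<dots> \<le> P" using h[of j] y by (simp add: divide_le_eq mult.commute)
  finally show False using k j by simp
qed

lemma fekete_like:
  fixes p :: "nat \<Rightarrow> nat" and D R :: nat
  assumes pos: "\<And>n. p n \<ge> 1" and p0: "p 0 \<le> 1"
    and mono: "\<And>m n. m \<le> n \<Longrightarrow> p m \<le> p n"
    and sub: "\<And>a b. p (a + b) \<le> p a * p b"
    and sup: "\<And>a b. p a * p b \<le> (D + 1) * p (a + b + D)"
    and D1: "D \<ge> 1" and bnd: "\<And>n. p n \<le> R ^ n"
  shows "\<exists>\<beta>>0. (\<forall>n. \<beta> ^ n \<le> real (p n)) \<and> (\<forall>n. real (p n) \<le> (real D + 1) * \<beta> ^ (n + D))"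
proof -
  define e where "e N = real (p N) / (real D + 1)" for N
  define f where "f N = e N powr (1 / real (N + D))" for N
  have R1: "real R \<ge> 1" using pos[of 1] bnd[of 1] by simp
  have e_pos: "e N > 0" for N unfolding e_def using pos[of N] by simp
  have e_le: "e N \<le> real (p N)" for N
    unfolding e_def using pos[of N] by (simp add: divide_le_eq)
  have f_pos: "f N > 0" for N unfolding f_def using e_pos[of N] by simp
  have f_bd: "f N \<le> real R" for N
  proof -
    have "e N \<le> real R ^ (N + D)"
    proof -
      have "e N \<le> real (p N)" by (rule e_le)
      also have "\<dots> \<le> real R ^ N" using of_nat_mono[OF bnd[of N], where 'a=real] by simp
      also have "\<dots> \<le> real R ^ (N + D)" by (rule power_increasing) (use R1 in auto)
      finally show ?thesis .
    qed
    then have "f N \<le> (real R ^ (N + D)) powr (1 / real (N + D))"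
      unfolding f_def by (rule powr_mono2[rotated 2]) (use e_pos[of N] in auto)
    also have "\<dots> = real R" by (rule root_pow) (use R1 D1 in auto)
    finally show ?thesis .
  qed
  have bdd: "bdd_above (range f)" using f_bd by (intro bdd_aboveI) auto
  define \<beta> where "\<beta> = (SUP N. f N)"
  have f_le: "f N \<le> \<beta>" for N unfolding \<beta>_def by (rule cSUP_upper[OF _ bdd]) simp
  have \<beta>_pos: "\<beta> > 0" using f_pos[of 0] f_le[of 0] by linarith
  have UB: "real (p N) \<le> (real D + 1) * \<beta> ^ (N + D)" for N
  proof -
    have "e N = f N ^ (N + D)" unfolding f_def by (rule pow_root[symmetric]) (use e_pos D1 in auto)
    also have "\<dots> \<le> \<beta> ^ (N + D)" by (rule power_mono[OF f_le]) (use f_pos[of N] in simp)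
    finally have "e N \<le> \<beta> ^ (N + D)" .
    then show ?thesis unfolding e_def by (simp add: divide_le_eq mult.commute)
  qed
  have key: "f N \<le> real (p n) powr (1 / real n)" if n: "n \<ge> 1" for N n
  proof -
    define s where "s = N + D"
    have s1: "s \<ge> 1" unfolding s_def using D1 by simp
    define P' where "P' = real (p n)"
    have P'1: "P' \<ge> 1" unfolding P'_def using pos[of n] by simp
    have c1: "e N ^ Suc k \<le> real (p (N + k * s))" for k
    proof (induction k)
      case 0 then show ?case using e_le[of N] by simp
    next
      case (Suc k)
      have eq: "N + Suc k * s = (N + k * s) + N + D" unfolding s_def by simp
      have h0: "real (p (N + k * s) * p N) \<le> real ((D + 1) * p (N + Suc k * s))"
        unfolding eq by (rule of_nat_mono[OF sup[of "N + k * s" N]])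
      then have "real (p (N + k * s)) * real (p N) \<le> real (D + 1) * real (p (N + Suc k * s))"
        by (simp only: of_nat_mult)
      then have "real (p (N + k * s)) * real (p N) \<le> (real D + 1) * real (p (N + Suc k * s))"
        by (simp only: of_nat_add of_nat_1)
      then have "real (p (N + k * s)) * e N \<le> real (p (N + Suc k * s))"
        unfolding e_def by (simp add: field_simps)
      moreover have "e N ^ Suc k * e N \<le> real (p (N + k * s)) * e N"
        by (rule mult_right_mono[OF Suc.IH]) (use e_pos[of N] in simp)
      ultimately show ?case by (simp add: mult.commute)
    qed
    have c2: "real (p (N + k * s)) \<le> (P' powr (real s / real n)) ^ Suc k * P'" for k
    proof -
      define M where "M = N + k * s"
      have P'0: "P' > 0" using P'1 by linarith
      have "real (p M) \<le> P' ^ (M div n + 1)"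
        unfolding P'_def using of_nat_mono[OF p_upper_div[OF sub p0 mono n, of M], where 'a=real] by simp
      also have "\<dots> = P' ^ (M div n) * P'" by simp
      also have "P' ^ (M div n) = P' powr real (M div n)" by (rule powr_realpow[OF P'0, symmetric])
      also have "P' powr real (M div n) * P' \<le> P' powr (real s / real n * real (Suc k)) * P'"
      proof (rule mult_right_mono)
        have "real (M div n) \<le> real M / real n" by (rule of_nat_div_le_of_nat)
        also have "\<dots> \<le> (real s * real (Suc k)) / real n"
        proof (rule divide_right_mono)
          have "M \<le> s * Suc k" unfolding M_def s_def by simp
          then have "real M \<le> real (s * Suc k)" by (rule of_nat_mono)
          then show "real M \<le> real s * real (Suc k)" by (simp only: of_nat_mult)
        qed simp
        also have "\<dots> = real s / real n * real (Suc k)" by simp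
        finally show "P' powr real (M div n) \<le> P' powr (real s / real n * real (Suc k))"
          by (rule powr_mono) (rule P'1)
      qed (use P'0 in linarith)
      also have "P' powr (real s / real n * real (Suc k)) = (P' powr (real s / real n)) powr real (Suc k)"
        by (rule powr_powr[symmetric])
      also have "\<dots> = (P' powr (real s / real n)) ^ Suc k"
        by (rule powr_realpow) (use P'0 in simp)
      finally show ?thesis unfolding M_def .
    qed
    have "e N \<le> P' powr (real s / real n)"
    proof (rule unbounded_ratio[OF _ P'1])
      show "P' powr (real s / real n) > 0" using P'1 by simp
      fix k show "e N ^ Suc k \<le> (P' powr (real s / real n)) ^ Suc k * P'"
        using c1[of k] c2[of k] by linarith
    qed
    then have "f N \<le> (P' powr (real s / real n)) powr (1 / real s)"
      unfolding f_def s_def[symmetric] by (rule powr_mono2[rotated 2]) (use e_pos[of N] in auto)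
    also have "\<dots> = P' powr (1 / real n)"
      using s1 by (simp add: powr_powr)
    finally show ?thesis unfolding P'_def .
  qed
  have LB: "\<beta> ^ n \<le> real (p n)" for n
  proof (cases "n = 0")
    case True then show ?thesis using pos[of 0] by simp
  next
    case False
    then have n: "n \<ge> 1" by simp
    have "\<beta> \<le> real (p n) powr (1 / real n)"
      unfolding \<beta>_def by (rule cSUP_least) (use key[OF n] in auto)
    then have "\<beta> ^ n \<le> (real (p n) powr (1 / real n)) ^ n"
      by (rule power_mono) (use \<beta>_pos in simp)
    also have "\<dots> = real (p n)" by (rule pow_root) (use pos[of n] n in auto)
    finally show ?thesis .
  qed
  show ?thesis using \<beta>_pos LB UB by blast
qed


lemma gap_abstract:
  fixes p q :: "nat \<Rightarrow> nat" and \<beta> C K :: real and c :: nat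
  assumes b: "\<beta> > 0" and LB: "\<And>n. \<beta> ^ n \<le> real (p n)" and UB: "\<And>n. real (p n) \<le> C * \<beta> ^ n"
    and S: "\<And>n. real (\<Sum>i\<le>n. q i * p (n - i)) \<le> K * real (p (n + c))"
  shows "\<exists>m. real (q m) < \<beta> ^ m"
proof (rule ccontr)
  assume "\<not> (\<exists>m. real (q m) < \<beta> ^ m)"
  then have qb: "\<beta> ^ m \<le> real (q m)" for m by (meson not_less)
  have K0: "K \<ge> 0"
  proof -
    have "0 \<le> real (\<Sum>i\<le>0. q i * p (0 - i))" by simp
    also have "\<dots> \<le> K * real (p (0 + c))" by (rule S)
    finally have "0 \<le> K * real (p c)" by simp
    moreover have "real (p c) > 0" using LB[of c] b by (meson less_le_trans zero_less_power)
    ultimately show ?thesis by (simp add: zero_le_mult_iff)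
  qed
  have bound: "real (n + 1) \<le> K * C * \<beta> ^ c" for n
  proof -
    have "real (n + 1) * \<beta> ^ n = (\<Sum>i\<le>n. \<beta> ^ i * \<beta> ^ (n - i))"
    proof -
      have "(\<Sum>i\<le>n. \<beta> ^ i * \<beta> ^ (n - i)) = (\<Sum>i\<le>n. \<beta> ^ n)"
      proof (rule sum.cong)
        fix i assume "i \<in> {..n}"
        then have "i + (n - i) = n" by simp
        then show "\<beta> ^ i * \<beta> ^ (n - i) = \<beta> ^ n" by (metis power_add)
      qed simp
      then show ?thesis by simp
    qed
    also have "\<dots> \<le> (\<Sum>i\<le>n. real (q i) * real (p (n - i)))"
    proof (rule sum_mono)
      fix i assume "i \<in> {..n}"
      show "\<beta> ^ i * \<beta> ^ (n - i) \<le> real (q i) * real (p (n - i))"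
        by (rule mult_mono[OF qb LB]) (use b in auto)
    qed
    also have "\<dots> = real (\<Sum>i\<le>n. q i * p (n - i))" by simp
    also have "\<dots> \<le> K * real (p (n + c))" by (rule S)
    also have "\<dots> \<le> K * (C * \<beta> ^ (n + c))" by (rule mult_left_mono[OF UB K0])
    also have "\<dots> = (K * C * \<beta> ^ c) * \<beta> ^ n" by (simp add: power_add)
    finally have "real (n + 1) * \<beta> ^ n \<le> (K * C * \<beta> ^ c) * \<beta> ^ n" .
    then show ?thesis using b by simp
  qed
  define n where "n = nat \<lceil>K * C * \<beta> ^ c\<rceil>"
  have "real (n + 1) > K * C * \<beta> ^ c" unfolding n_def by linarith
  then show False using bound[of n] by linarith
qed

lemma gamma_from:
  fixes q :: "nat \<Rightarrow> nat" and \<beta> :: real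
  assumes pos: "\<And>n. q n \<ge> 1" and q0: "q 0 \<le> 1" and sub: "\<And>a b. q (a + b) \<le> q a * q b"
    and b: "\<beta> > 0" and lt: "real (q m) < \<beta> ^ m"
  shows "\<exists>\<gamma> M. 0 < \<gamma> \<and> \<gamma> < \<beta> \<and> (\<forall>n. real (q n) \<le> M * \<gamma> ^ n)"
proof -
  have m: "m \<ge> 1"
  proof (rule ccontr)
    assume "\<not> m \<ge> 1" then have "m = 0" by simp
    then show False using lt pos[of 0] by simp
  qed
  define \<gamma> where "\<gamma> = real (q m) powr (1 / real m)"
  have qm0: "real (q m) > 0" using pos[of m] by simp
  have g1: "\<gamma> \<ge> 1" unfolding \<gamma>_def using pos[of m] m by (intro ge_one_powr_ge_zero) auto
  have gb: "\<gamma> < \<beta>"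
  proof -
    have "\<gamma> < (\<beta> ^ m) powr (1 / real m)" unfolding \<gamma>_def
      by (rule powr_less_mono2) (use lt m qm0 in auto)
    also have "\<dots> = \<beta>" by (rule root_pow[OF b m])
    finally show ?thesis .
  qed
  have gm: "\<gamma> ^ m = real (q m)" unfolding \<gamma>_def by (rule pow_root[OF qm0 m])
  define M where "M = real (Max (q ` {..<m}))"
  have bound: "real (q n) \<le> M * \<gamma> ^ n" for n
  proof -
    have "q n = q (n div m * m + n mod m)" by simp
    also have "\<dots> \<le> q (n div m * m) * q (n mod m)" by (rule sub)
    also have "\<dots> \<le> q m ^ (n div m) * Max (q ` {..<m})"
    proof (rule mult_mono)
      show "q (n div m * m) \<le> q m ^ (n div m)" by (rule pow_submult[OF sub q0])
      show "q (n mod m) \<le> Max (q ` {..<m})" by (rule Max_ge) (use m in auto)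
    qed simp_all
    finally have "real (q n) \<le> real (q m ^ (n div m) * Max (q ` {..<m}))" by (rule of_nat_mono)
    also have "\<dots> = (\<gamma> ^ m) ^ (n div m) * M" unfolding M_def gm by simp
    also have "\<dots> = \<gamma> ^ (m * (n div m)) * M" by (simp add: power_mult)
    also have "\<dots> \<le> \<gamma> ^ n * M"
    proof (rule mult_right_mono)
      have "m * (n div m) \<le> n" by (simp add: mult.commute)
      then show "\<gamma> ^ (m * (n div m)) \<le> \<gamma> ^ n" by (rule power_increasing) (rule g1)
    qed (simp add: M_def)
    finally show ?thesis by (simp add: mult.commute)
  qed
  show ?thesis using g1 gb bound by (intro exI[of _ \<gamma>] exI[of _ M]) auto
qed


lemma koenig:
  fixes B :: "'v::finite bexp"
  assumes cov: "\<And>w. w \<in> inv_lang B \<Longrightarrow> \<exists>k. prefix k w \<in> V"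
  shows "\<exists>n. \<forall>u\<in>P n (inv_lang B). \<exists>k\<le>n. take k u \<in> V"
proof (rule ccontr)
  let ?L = "inv_lang B"
  assume "\<not> (\<exists>n. \<forall>u\<in>P n ?L. \<exists>k\<le>n. take k u \<in> V)"
  then have bex: "\<exists>u\<in>P n ?L. \<forall>k\<le>n. take k u \<notin> V" for n by blast
  define Bad where "Bad = {u \<in> prefixes_of ?L. \<forall>k\<le>length u. take k u \<notin> V}"
  have bad_ex: "\<exists>u\<in>Bad. length u = n" for n
    using bex[of n] unfolding Bad_def P_def by auto
  have Bad_take: "take j u \<in> Bad" if "u \<in> Bad" for u j
  proof -
    have "take j u \<in> prefixes_of ?L" using that pref_take unfolding Bad_def by blast
    moreover have "take k (take j u) \<notin> V" if k: "k \<le> length (take j u)" for k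
    proof -
      have "k \<le> j" using k by simp
      then have "take k (take j u) = take k u" by (simp add: min_def)
      moreover have "k \<le> length u" using k by simp
      ultimately show ?thesis using \<open>u \<in> Bad\<close> unfolding Bad_def by auto
    qed
    ultimately show ?thesis unfolding Bad_def by blast
  qed
  define good where "good u \<longleftrightarrow> (\<forall>n. \<exists>u'\<in>Bad. length u' = length u + n \<and> take (length u) u' = u)" for u
  have good_nil: "good []" unfolding good_def using bad_ex by simp
  have good_step: "\<exists>a. good (u @ [a])" if gu: "good u" for u
  proof -
    have "\<forall>n. \<exists>u'. u' \<in> Bad \<and> length u' = length u + Suc n \<and> take (length u) u' = u"
      using gu unfolding good_def by blast
    then obtain U where U: "\<And>n. U n \<in> Bad" "\<And>n. length (U n) = length u + Suc n"
      "\<And>n. take (length u) (U n) = u"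
      by metis
    define l where "l n = U n ! length u" for n
    have "finite (l ` UNIV)" by simp
    then obtain n0 where n0: "infinite {n. l n = l n0}"
      using pigeonhole_infinite[of "UNIV :: nat set" l] by auto
    show ?thesis
    proof (rule exI[of _ "l n0"], unfold good_def, rule allI)
      fix n
      obtain n' where n': "n' \<ge> n" "l n' = l n0"
        using n0 unfolding infinite_nat_iff_unbounded_le by blast
      define u' where "u' = take (length u + Suc n) (U n')"
      have "u' \<in> Bad" unfolding u'_def by (rule Bad_take[OF U(1)])
      moreover have "length u' = length (u @ [l n0]) + n"
        unfolding u'_def using U(2)[of n'] n'(1) by simp
      moreover have "take (length (u @ [l n0])) u' = u @ [l n0]"
      proof -
        have lt: "length u < length (U n')" using U(2)[of n'] by simp
        have "take (length (u @ [l n0])) u' = take (Suc (length u)) (U n')"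
          unfolding u'_def by (simp add: min_def)
        also have "\<dots> = take (length u) (U n') @ [U n' ! length u]"
          by (rule take_Suc_conv_app_nth[OF lt])
        also have "\<dots> = u @ [l n0]" using U(3)[of n'] n'(2) unfolding l_def by simp
        finally show ?thesis .
      qed
      ultimately show "\<exists>u'\<in>Bad. length u' = length (u @ [l n0]) + n \<and> take (length (u @ [l n0])) u' = u @ [l n0]"
        by blast
    qed
  qed
  define s where "s = rec_nat [] (\<lambda>k sk. sk @ [SOME a. good (sk @ [a])])"
  have s0: "s 0 = []" unfolding s_def by simp
  have sS: "s (Suc k) = s k @ [SOME a. good (s k @ [a])]" for k unfolding s_def by simp
  have sg: "good (s k) \<and> length (s k) = k" for k
  proof (induction k)
    case 0 then show ?case using good_nil s0 by simp
  next
    case (Suc k)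
    have "good (s k @ [SOME a. good (s k @ [a])])"
      using good_step[of "s k"] Suc.IH by (metis someI_ex)
    then show ?case using Suc.IH sS[of k] by simp
  qed
  define x where "x k = s (Suc k) ! k" for k
  have px: "prefix k x = s k" for k
  proof (induction k)
    case 0 then show ?case using s0 by simp
  next
    case (Suc k)
    have "prefix (Suc k) x = prefix k x @ [x k]" by simp
    also have "\<dots> = s k @ [x k]" using Suc.IH by simp
    also have "\<dots> = s (Suc k)" unfolding x_def sS[of k] using sg[of k] by (simp add: nth_append)
    finally show ?case .
  qed
  have sBad: "s k \<in> Bad" for k
  proof -
    obtain u' where u': "u' \<in> Bad" "length u' = length (s k) + 0" "take (length (s k)) u' = s k"
      using sg[of k] unfolding good_def by blast
    then have "u' = s k" by simp
    then show ?thesis using u'(1) by simp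
  qed
  have "prefix k x \<in> prefixes_of ?L" for k using sBad[of k] px[of k] unfolding Bad_def by simp
  then have "x \<in> ?L" by (rule pref_closed)
  then obtain k where "prefix k x \<in> V" using cov by blast
  moreover have "take k (s k) \<notin> V"
  proof -
    have "\<forall>j\<le>length (s k). take j (s k) \<notin> V" using sBad[of k] unfolding Bad_def by blast
    then show ?thesis using sg[of k] by auto
  qed
  ultimately show False using px[of k] sg[of k] by simp
qed


lemma card_ext_le:
  fixes B :: "'v::finite bexp"
  assumes "length v \<le> n"
  shows "card {u \<in> P n (inv_lang B). take (length v) u = v} \<le> card (P (n - length v) (inv_lang B))"
proof (rule card_inj_on_le)
  let ?E = "{u \<in> P n (inv_lang B). take (length v) u = v}"
  show "inj_on (drop (length v)) ?E"
  proof (rule inj_onI)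
    fix x y assume x: "x \<in> ?E" and y: "y \<in> ?E" and e: "drop (length v) x = drop (length v) y"
    have "x = take (length v) x @ drop (length v) x" by simp
    also have "\<dots> = take (length v) y @ drop (length v) y" using x y e by simp
    also have "\<dots> = y" by simp
    finally show "x = y" .
  qed
  show "drop (length v) ` ?E \<subseteq> P (n - length v) (inv_lang B)"
    unfolding P_def using pref_drop by auto
  show "finite (P (n - length v) (inv_lang B))" by (rule finite_P)
qed

lemma mass:
  fixes B :: "'v::finite bexp" and \<beta> C :: real
  assumes b: "\<beta> > 0" and C: "C > 0"
    and LB: "\<And>n. \<beta> ^ n \<le> real (card (P n (inv_lang B)))"
    and UB: "\<And>n. real (card (P n (inv_lang B))) \<le> C * \<beta> ^ n"
  shows "ennreal (1 / C) \<le> hausdorff_measure (log (real CARD('v set)) \<beta>) (inv_lang B)"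
proof -
  let ?L = "inv_lang B"
  let ?a = "log (real CARD('v set)) \<beta>"
  have "ennreal (1 / C) \<le> Infn ?a ?L 0"
    unfolding Infn_def
  proof (rule INF_greatest)
    fix V assume V: "V \<in> covers 0 ?L"
    then have cov: "\<And>w. w \<in> ?L \<Longrightarrow> \<exists>k. prefix k w \<in> V" unfolding covers_def by blast
    obtain n where n: "\<forall>u\<in>P n ?L. \<exists>k\<le>n. take k u \<in> V" using koenig[OF cov] by blast
    define F where "F = {v \<in> V. length v \<le> n}"
    have finF: "finite F"
      by (rule finite_subset[OF _ finite_lists_length_le[of "UNIV :: 'v set set" n]]) (auto simp: F_def)
    have FV: "F \<subseteq> V" unfolding F_def by blast
    define E where "E v = {u \<in> P n ?L. take (length v) u = v}" for v
    have sub: "P n ?L \<subseteq> (\<Union>v\<in>F. E v)"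
    proof
      fix u assume u: "u \<in> P n ?L"
      then obtain k where k: "k \<le> n" "take k u \<in> V" using n by blast
      have lu: "length u = n" using u unfolding P_def by simp
      then have "length (take k u) = k" using k by simp
      then have "take k u \<in> F" "u \<in> E (take k u)" using k u lu unfolding F_def E_def by auto
      then show "u \<in> (\<Union>v\<in>F. E v)" by blast
    qed
    have "\<beta> ^ n \<le> real (card (P n ?L))" by (rule LB)
    also have "card (P n ?L) \<le> (\<Sum>v\<in>F. card (E v))"
    proof -
      have "card (P n ?L) \<le> card (\<Union>v\<in>F. E v)"
        by (rule card_mono[OF _ sub]) (use finF in \<open>auto simp: E_def intro: finite_subset[OF _ finite_P]\<close>)
      also have "\<dots> \<le> (\<Sum>v\<in>F. card (E v))" by (rule card_UN_le[OF finF])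
      finally show ?thesis .
    qed
    then have "real (card (P n ?L)) \<le> real (\<Sum>v\<in>F. card (E v))" by (rule of_nat_mono)
    also have "\<dots> = (\<Sum>v\<in>F. real (card (E v)))" by simp
    also have "\<dots> \<le> (\<Sum>v\<in>F. C * \<beta> ^ n * (1 / \<beta> ^ length v))"
    proof (rule sum_mono)
      fix v assume v: "v \<in> F"
      then have lv: "length v \<le> n" unfolding F_def by simp
      have "real (card (E v)) \<le> real (card (P (n - length v) ?L))"
        unfolding E_def by (rule of_nat_mono[OF card_ext_le[OF lv]])
      also have "\<dots> \<le> C * \<beta> ^ (n - length v)" by (rule UB)
      also have "\<beta> ^ (n - length v) = \<beta> ^ n / \<beta> ^ length v"
        by (rule power_diff) (use b lv in auto)
      finally show "real (card (E v)) \<le> C * \<beta> ^ n * (1 / \<beta> ^ length v)" by simp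
    qed
    also have "\<dots> = C * \<beta> ^ n * (\<Sum>v\<in>F. 1 / \<beta> ^ length v)"
      by (simp only: sum_distrib_left)
    also have "(\<Sum>v\<in>F. 1 / \<beta> ^ length v) = (\<Sum>v\<in>F. wt ?a v)"
      by (rule sum.cong[OF refl]) (rule wt_log[OF b, symmetric])
    finally have "\<beta> ^ n \<le> C * \<beta> ^ n * (\<Sum>v\<in>F. wt ?a v)" .
    then have "1 \<le> C * (\<Sum>v\<in>F. wt ?a v)" using b by (simp add: mult.commute mult.left_commute)
    then have "1 / C \<le> (\<Sum>v\<in>F. wt ?a v)" using C by (simp add: divide_le_eq mult.commute)
    then have "ennreal (1 / C) \<le> ennreal (\<Sum>v\<in>F. wt ?a v)" by (rule ennreal_leI)
    also have "\<dots> \<le> cover_sum ?a V" by (rule cover_sum_fin[OF finF FV])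
    finally show "ennreal (1 / C) \<le> cover_sum ?a V" .
  qed
  also have "\<dots> \<le> hausdorff_measure ?a ?L" unfolding hm_SUP by (rule SUP_upper) simp
  finally show ?thesis .
qed


locale setting =
  fixes B1 B2 :: "'v::finite bexp"
  assumes ne1: "inv_lang B1 \<noteq> {}" and ne2: "inv_lang B2 \<noteq> {}"
    and subl: "\<forall>w. sat_inv w B1 \<longrightarrow> sat_inv w B2"
    and strict: "\<not> (\<forall>w. sat_inv w B2 \<longrightarrow> sat_inv w B1)"
    and sc: "strongly_connected (inv_lang B2)"
begin

lemma L12: "inv_lang B1 \<subseteq> inv_lang B2"
  using subl unfolding inv_lang_def by blast

lemma A12: "prefixes_of (inv_lang B1) \<subseteq> prefixes_of (inv_lang B2)"
  using L12 unfolding prefixes_of_def by blast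

definition D :: nat where
  "D = (SOME D. D \<ge> 1 \<and> (\<forall>u\<in>prefixes_of (inv_lang B2). \<exists>v. length v \<le> D \<and> free B2 (u @ v)))"

lemma D_prop: "D \<ge> 1 \<and> (\<forall>u\<in>prefixes_of (inv_lang B2). \<exists>v. length v \<le> D \<and> free B2 (u @ v))"
  unfolding D_def by (rule someI_ex) (rule sc_bound[OF sc])

lemma D1: "D \<ge> 1" using D_prop by blast

definition vf :: "'v set list \<Rightarrow> 'v set list" where
  "vf u = (SOME v. length v \<le> D \<and> free B2 (u @ v))"

lemma vf_prop:
  assumes "u \<in> prefixes_of (inv_lang B2)"
  shows "length (vf u) \<le> D \<and> free B2 (u @ vf u)"
proof -
  have "\<exists>v. length v \<le> D \<and> free B2 (u @ v)" using D_prop assms by blast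
  then show ?thesis unfolding vf_def by (rule someI_ex)
qed

lemma witness:
  "\<exists>h j0. free B2 h \<and> Suc j0 < length h \<and> \<not> brel B1 (h ! j0) (h ! Suc j0)"
proof -
  obtain w where w: "sat_inv w B2" "\<not> sat_inv w B1" using strict by blast
  obtain j where j: "\<not> brel B1 (w j) (w (Suc j))" using w(2) unfolding sat_inv_iff by blast
  have wL: "w \<in> inv_lang B2" using w(1) unfolding inv_lang_def by simp
  define u0 where "u0 = prefix (Suc (Suc j)) w"
  have "u0 \<in> prefixes_of (inv_lang B2)" unfolding u0_def prefixes_of_def using wL by blast
  then obtain v0 where fr: "free B2 (u0 @ v0)" using sc_free[OF sc] by blast
  have l: "length u0 = Suc (Suc j)" unfolding u0_def by simp
  have "(u0 @ v0) ! j = w j" "(u0 @ v0) ! Suc j = w (Suc j)"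
    using l unfolding u0_def by (simp_all add: nth_append)
  moreover have "Suc j < length (u0 @ v0)" using l by simp
  ultimately show ?thesis using fr j by metis
qed

abbreviation pp :: "nat \<Rightarrow> nat" where "pp n \<equiv> card (P n (inv_lang B2))"
abbreviation qq :: "nat \<Rightarrow> nat" where "qq n \<equiv> card (P n (inv_lang B1))"

lemma supermult: "pp a * pp b \<le> (D + 1) * pp (a + b + D)"
proof -
  let ?L = "inv_lang B2"
  let ?T = "Sigma {..D} (\<lambda>t. P (a + b + t) ?L)"
  let ?f = "\<lambda>(u, y). (length (vf u), u @ vf u @ y)"
  have inj: "inj_on ?f (P a ?L \<times> P b ?L)"
  proof (rule inj_onI)
    fix x x' assume x: "x \<in> P a ?L \<times> P b ?L" and x': "x' \<in> P a ?L \<times> P b ?L" and e0: "?f x = ?f x'"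
    obtain u y where xu: "x = (u, y)" by (cases x)
    obtain u' y' where xu': "x' = (u', y')" by (cases x')
    have e: "length (vf u) = length (vf u')" "u @ vf u @ y = u' @ vf u' @ y'" using e0 unfolding xu xu' by simp_all
    have lu: "length u = a" "length u' = a" using x x' unfolding xu xu' P_def by auto
    have "u = take a (u @ vf u @ y)" using lu by simp
    also have "\<dots> = u'" using e(2) lu by simp
    finally have uu: "u = u'" .
    have "y = drop (a + length (vf u)) (u @ vf u @ y)" using lu by simp
    also have "\<dots> = y'" using e lu by simp
    finally show "x = x'" using uu unfolding xu xu' by simp
  qed
  have im: "?f ` (P a ?L \<times> P b ?L) \<subseteq> ?T"
  proof
    fix z assume "z \<in> ?f ` (P a ?L \<times> P b ?L)"
    then obtain u y where z: "z = (length (vf u), u @ vf u @ y)" and u: "u \<in> P a ?L" and y: "y \<in> P b ?L"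
      by auto
    have uA: "u \<in> prefixes_of ?L" and lu: "length u = a" using u unfolding P_def by auto
    have yA: "y \<in> prefixes_of ?L" and ly: "length y = b" using y unfolding P_def by auto
    have vp: "length (vf u) \<le> D" "free B2 (u @ vf u)" using vf_prop[OF uA] by auto
    have "(u @ vf u) @ y \<in> prefixes_of ?L" by (rule free_app_pref[OF vp(2) yA])
    then have "u @ vf u @ y \<in> P (a + b + length (vf u)) ?L" unfolding P_def using lu ly by simp
    then show "z \<in> ?T" using vp(1) z by simp
  qed
  have finT: "finite ?T" by (intro finite_SigmaI finite_P) simp
  have "pp a * pp b = card (P a ?L \<times> P b ?L)" by (simp add: card_cartesian_product)
  also have "\<dots> \<le> card ?T" by (rule card_inj_on_le[OF inj im finT])
  also have "\<dots> = (\<Sum>t\<le>D. pp (a + b + t))" by (rule card_SigmaI) (simp_all add: finite_P)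
  also have "\<dots> \<le> (\<Sum>t\<le>D. pp (a + b + D))"
    by (rule sum_mono) (rule card_P_mono[OF ne2], simp)
  also have "\<dots> = (D + 1) * pp (a + b + D)" by simp
  finally show ?thesis .
qed


lemma gap_sum:
  assumes fh: "free B2 h" and jl: "Suc j0 < length h" and nb: "\<not> brel B1 (h ! j0) (h ! Suc j0)"
  shows "(\<Sum>i\<le>n. qq i * pp (n - i)) \<le> ((D + 1) * (D + length h + 2)) * pp (n + (length h + D))"
proof -
  let ?L1 = "inv_lang B1" and ?L2 = "inv_lang B2" and ?l = "length h"
  define occ where "occ r k \<longleftrightarrow> Suc k < length r \<and> r ! k = h ! j0 \<and> r ! Suc k = h ! Suc j0" for r k
  define fp where "fp r = (LEAST k. occ r k)" for r
  define R where "R w y = w @ vf w @ h @ y" for w y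
  define Phi where "Phi = (\<lambda>(i, w, y). (length (vf w), (i + length (vf w) + j0 + 1 - fp (R w y), R w y)))"
  define Dom where "Dom = Sigma {..n} (\<lambda>i. P i ?L1 \<times> P (n - i) ?L2)"
  define T where "T = Sigma {..D} (\<lambda>t. {..D + ?l + 1} \<times> P (n + ?l + t) ?L2)"
  have facts: "length (vf w) \<le> D \<and> R w y \<in> P (n + ?l + length (vf w)) ?L2 \<and>
      fp (R w y) \<le> i + length (vf w) + j0 \<and> i \<le> Suc (fp (R w y))"
    if i: "i \<le> n" and w: "w \<in> P i ?L1" and y: "y \<in> P (n - i) ?L2" for i w y
  proof -
    have wA1: "w \<in> prefixes_of ?L1" and lw: "length w = i" using w unfolding P_def by auto
    have wA2: "w \<in> prefixes_of ?L2" using wA1 A12 by blast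
    have yA: "y \<in> prefixes_of ?L2" and ly: "length y = n - i" using y unfolding P_def by auto
    have vp: "length (vf w) \<le> D" "free B2 (w @ vf w)" using vf_prop[OF wA2] by auto
    define t where "t = length (vf w)"
    have hy: "h @ y \<in> prefixes_of ?L2" by (rule free_app_pref[OF fh yA])
    have "(w @ vf w) @ (h @ y) \<in> prefixes_of ?L2" by (rule free_app_pref[OF vp(2) hy])
    then have rA: "R w y \<in> prefixes_of ?L2" unfolding R_def by simp
    have lr: "length (R w y) = n + ?l + t" unfolding R_def t_def using lw ly i by simp
    have rsplit: "R w y = (w @ vf w) @ (h @ y)" unfolding R_def by simp
    have lwv: "length (w @ vf w) = i + t" unfolding t_def using lw by simp
    have r1: "R w y ! (i + t + j0) = h ! j0"
    proof -
      have "R w y ! (i + t + j0) = ((w @ vf w) @ (h @ y)) ! (length (w @ vf w) + j0)"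
        unfolding rsplit lwv ..
      also have "\<dots> = (h @ y) ! j0" by (rule nth_append_length_plus)
      also have "\<dots> = h ! j0" using jl by (simp add: nth_append)
      finally show ?thesis .
    qed
    have r2: "R w y ! Suc (i + t + j0) = h ! Suc j0"
    proof -
      have "R w y ! Suc (i + t + j0) = ((w @ vf w) @ (h @ y)) ! (length (w @ vf w) + Suc j0)"
        unfolding rsplit lwv by simp
      also have "\<dots> = (h @ y) ! Suc j0" by (rule nth_append_length_plus)
      also have "\<dots> = h ! Suc j0" using jl by (simp add: nth_append)
      finally show ?thesis .
    qed
    have occ1: "occ (R w y) (i + t + j0)" unfolding occ_def using r1 r2 lr jl i by simp
    have fle: "fp (R w y) \<le> i + t + j0" unfolding fp_def by (rule Least_le[of "occ (R w y)", OF occ1])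
    have occf: "occ (R w y) (fp (R w y))" unfolding fp_def by (rule LeastI[of "occ (R w y)", OF occ1])
    have fge: "i \<le> Suc (fp (R w y))"
    proof (rule ccontr)
      define k where "k = fp (R w y)"
      assume "\<not> i \<le> Suc (fp (R w y))"
      then have lt: "Suc k < length w" using lw unfolding k_def by simp
      have ok: "occ (R w y) k" using occf unfolding k_def .
      have rs: "R w y = w @ (vf w @ h @ y)" unfolding R_def by simp
      have "R w y ! k = w ! k" unfolding rs by (rule nth_append_left) (use lt in simp)
      moreover have "R w y ! Suc k = w ! Suc k" unfolding rs by (rule nth_append_left) (use lt in simp)
      ultimately have "w ! k = h ! j0" "w ! Suc k = h ! Suc j0"
        using ok unfolding occ_def by simp_all
      moreover have "brel B1 (w ! k) (w ! Suc k)" by (rule pref_pair[OF wA1 lt])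
      ultimately show False using nb by simp
    qed
    show ?thesis using vp(1) rA lr fle fge unfolding P_def t_def by simp
  qed
  have inj: "inj_on Phi Dom"
  proof (rule inj_onI)
    fix x x' assume x: "x \<in> Dom" and x': "x' \<in> Dom" and e0: "Phi x = Phi x'"
    obtain i w y where xe: "x = (i, w, y)" by (cases x) auto
    obtain i' w' y' where xe': "x' = (i', w', y')" by (cases x') auto
    have i: "i \<le> n" and w: "w \<in> P i ?L1" and y: "y \<in> P (n - i) ?L2" using x unfolding xe Dom_def by auto
    have i': "i' \<le> n" and w': "w' \<in> P i' ?L1" and y': "y' \<in> P (n - i') ?L2" using x' unfolding xe' Dom_def by auto
    have pe: "(length (vf w), (i + length (vf w) + j0 + 1 - fp (R w y), R w y)) =
      (length (vf w'), (i' + length (vf w') + j0 + 1 - fp (R w' y'), R w' y'))"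
      using e0 unfolding Phi_def xe xe' by (simp only: case_prod_conv)
    have e1: "length (vf w) = length (vf w')" using arg_cong[OF pe, of fst] by (simp only: fst_conv)
    have e2: "i + length (vf w) + j0 + 1 - fp (R w y) = i' + length (vf w') + j0 + 1 - fp (R w' y')"
      using arg_cong[OF pe, of "\<lambda>z. fst (snd z)"] by (simp only: fst_conv snd_conv)
    have e3: "R w y = R w' y'" using arg_cong[OF pe, of "\<lambda>z. snd (snd z)"] by (simp only: snd_conv)
    note e = e1 e2 e3
    have f1: "fp (R w y) \<le> i + length (vf w) + j0" using facts[OF i w y] by blast
    have f2: "fp (R w' y') \<le> i' + length (vf w') + j0" using facts[OF i' w' y'] by blast
    have ii: "i = i'" using e f1 f2 by simp
    have lw: "length w = i" "length w' = i'" using w w' unfolding P_def by auto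
    have "w = take i (R w y)" unfolding R_def using lw by simp
    also have "\<dots> = w'" using e(3) lw ii unfolding R_def by simp
    finally have ww: "w = w'" .
    have "y = drop (i + length (vf w) + ?l) (R w y)" unfolding R_def using lw by simp
    also have "\<dots> = y'" using e lw ii unfolding R_def by simp
    finally show "x = x'" using ii ww unfolding xe xe' by simp
  qed
  have im: "Phi ` Dom \<subseteq> T"
  proof
    fix z assume "z \<in> Phi ` Dom"
    then obtain i w y where z: "z = Phi (i, w, y)" and i: "i \<le> n" and w: "w \<in> P i ?L1" and y: "y \<in> P (n - i) ?L2"
      unfolding Dom_def by auto
    have F: "length (vf w) \<le> D" "R w y \<in> P (n + ?l + length (vf w)) ?L2"
      "fp (R w y) \<le> i + length (vf w) + j0" "i \<le> Suc (fp (R w y))" using facts[OF i w y] by auto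
    have "i + length (vf w) + j0 + 1 - fp (R w y) \<le> D + ?l + 1" using F(1,4) jl by linarith
    then show "z \<in> T" unfolding z Phi_def T_def using F(1,2) by simp
  qed
  have finT: "finite T" unfolding T_def by (intro finite_SigmaI finite_cartesian_product finite_P) simp_all
  have "(\<Sum>i\<le>n. qq i * pp (n - i)) = card Dom"
    unfolding Dom_def by (subst card_SigmaI) (simp_all add: card_cartesian_product finite_P)
  also have "\<dots> \<le> card T" by (rule card_inj_on_le[OF inj im finT])
  also have "\<dots> = (\<Sum>t\<le>D. (D + ?l + 2) * pp (n + ?l + t))"
    unfolding T_def by (subst card_SigmaI) (simp_all add: card_cartesian_product finite_P)
  also have "\<dots> \<le> (\<Sum>t\<le>D. (D + ?l + 2) * pp (n + (?l + D)))"
  proof (rule sum_mono)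
    fix t assume "t \<in> {..D}"
    then have "n + ?l + t \<le> n + (?l + D)" by simp
    then show "(D + ?l + 2) * pp (n + ?l + t) \<le> (D + ?l + 2) * pp (n + (?l + D))"
      by (intro mult_left_mono card_P_mono[OF ne2]) simp_all
  qed
  also have "\<dots> = ((D + 1) * (D + ?l + 2)) * pp (n + (?l + D))"
    by (simp only: sum_constant card_atMost of_nat_id Suc_eq_plus1 mult.assoc)
  finally show ?thesis .
qed


lemma main_result: "hausdorff_dim (inv_lang B1) < hausdorff_dim (inv_lang B2)"
proof -
  let ?r = "real CARD('v set)"
  have pos: "\<And>n. pp n \<ge> 1" using card_P_pos[OF ne2] by blast
  have p0: "pp 0 \<le> 1" using card_P_le[of 0 "inv_lang B2"] by simp
  have mono: "\<And>m n. m \<le> n \<Longrightarrow> pp m \<le> pp n" using card_P_mono[OF ne2] by blast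
  have sub: "\<And>a b. pp (a + b) \<le> pp a * pp b" by (rule card_P_submult)
  have bnd: "\<And>n. pp n \<le> CARD('v set) ^ n" by (rule card_P_le)
  obtain \<beta> where b: "\<beta> > 0" and LB: "\<And>n. \<beta> ^ n \<le> real (pp n)"
    and UB0: "\<And>n. real (pp n) \<le> (real D + 1) * \<beta> ^ (n + D)"
    using fekete_like[OF pos p0 mono sub supermult D1 bnd] by blast
  define C where "C = (real D + 1) * \<beta> ^ D"
  have C0: "C > 0" unfolding C_def using b by simp
  have UB: "real (pp n) \<le> C * \<beta> ^ n" for n
  proof -
    have "(real D + 1) * \<beta> ^ (n + D) = C * \<beta> ^ n"
      unfolding C_def power_add by (simp only: mult.assoc mult.commute mult.left_commute)
    then show ?thesis using UB0[of n] by linarith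
  qed
  obtain h j0 where hw: "free B2 h" "Suc j0 < length h" "\<not> brel B1 (h ! j0) (h ! Suc j0)"
    using witness by blast
  define K where "K = real ((D + 1) * (D + length h + 2))"
  have S: "real (\<Sum>i\<le>n. qq i * pp (n - i)) \<le> K * real (pp (n + (length h + D)))" for n
  proof -
    have "real (\<Sum>i\<le>n. qq i * pp (n - i)) \<le> real (((D + 1) * (D + length h + 2)) * pp (n + (length h + D)))"
      by (rule of_nat_mono[OF gap_sum[OF hw]])
    then show ?thesis unfolding K_def by (simp only: of_nat_mult)
  qed
  obtain m where m: "real (qq m) < \<beta> ^ m" using gap_abstract[OF b LB UB S] by blast
  have qpos: "\<And>n. qq n \<ge> 1" using card_P_pos[OF ne1] by blast
  have q0: "qq 0 \<le> 1" using card_P_le[of 0 "inv_lang B1"] by simp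
  have qsub: "\<And>a b. qq (a + b) \<le> qq a * qq b" by (rule card_P_submult)
  obtain \<gamma> M where g: "0 < \<gamma>" "\<gamma> < \<beta>" and qM: "\<And>n. real (qq n) \<le> M * \<gamma> ^ n"
    using gamma_from[OF qpos q0 qsub b m] by blast
  have h1: "hausdorff_measure (log ?r \<gamma>) (inv_lang B1) \<le> ennreal M"
    by (rule hm_le_count[OF g(1) qM])
  have h1': "hausdorff_measure (log ?r \<gamma>) (inv_lang B1) \<noteq> \<infinity>"
    using le_less_trans[OF h1 ennreal_less_top[of M]] by simp
  have d1: "hausdorff_dim (inv_lang B1) \<le> log ?r \<gamma>" by (rule dim_le[OF ne1 h1'])
  have h2: "hausdorff_measure (log ?r \<beta>) (inv_lang B2) \<le> ennreal C"
    by (rule hm_le_count[OF b UB])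
  have h2': "hausdorff_measure (log ?r \<beta>) (inv_lang B2) \<noteq> \<infinity>"
    using le_less_trans[OF h2 ennreal_less_top[of C]] by simp
  have h3: "ennreal (1 / C) \<le> hausdorff_measure (log ?r \<beta>) (inv_lang B2)"
    by (rule mass[OF b C0 LB UB])
  have "ennreal (1 / C) > 0" using C0 by simp
  then have "hausdorff_measure (log ?r \<beta>) (inv_lang B2) > 0" using h3 by (rule less_le_trans)
  then have h3': "hausdorff_measure (log ?r \<beta>) (inv_lang B2) \<noteq> 0" by simp
  have d2: "log ?r \<beta> \<le> hausdorff_dim (inv_lang B2)" by (rule dim_ge[OF ne2 h2' h3'])
  have r1: "?r > 1" using rr_ge2[where 'v='v] by linarith
  have "log ?r \<gamma> < log ?r \<beta>" by (rule iffD2[OF log_less_cancel_iff[OF r1 g(1) b] g(2)])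
  then show ?thesis using d1 d2 by linarith
qed

end


theorem theorem2:
  fixes B1 B2 :: "'v::finite bexp"
  assumes "inv_lang B1 \<noteq> {}"
    and "inv_lang B2 \<noteq> {}"
    and "\<forall>w. sat_inv w B1 \<longrightarrow> sat_inv w B2"
    and "\<not> (\<forall>w. sat_inv w B2 \<longrightarrow> sat_inv w B1)"
    and "strongly_connected (inv_lang B2)"
  shows "hausdorff_dim (inv_lang B1) < hausdorff_dim (inv_lang B2)"
proof -
  interpret setting B1 B2 by (rule setting.intro[OF assms])
  show ?thesis by (rule main_result)
qed

end
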